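(* Let $\varphi:\mathbb{R}^n\to[0,\infty]$ be a lower semicontinuous convex function with $\varphi(0)=0$, and let $\varphi^\circ(x)=\sup_{y\in\mathbb{R}^n}\frac{\langle x,y\rangle-1}{\varphi(y)}$. Then for every $t>0$, \[ \underline{K}_{1/t}(\varphi)^\circ\subseteq \underline{K}_t(\varphi^\circ)\subseteq 2\,\underline{K}_{1/t}(\varphi)^\circ . \]
   Context: For a function $\psi$ and $s\in\mathbb{R}$, $\underline{K}_s(\psi)=\{x\in\mathbb{R}^n:\psi(x)\le s\}$. For a set $K\subseteq\mathbb{R}^n$, its polar is $K^\circ=\{y\in\mathbb{R}^n:\ \langle x,y\rangle\le 1\ \text{for all } x\in K\}$. In the definition of $\varphi^\circ$ the usual conventions of the $\mathcal{A}$-transform are used: $a/0=+\infty$ if $a>0$, $a/0=0$ if $a\le 0$, and $a/\infty=0$. *)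

theory Defs
  imports "HOL-Analysis.Analysis"
begin

definition ereal_convex :: "('a::real_vector \<Rightarrow> ereal) \<Rightarrow> bool" where
  "ereal_convex f \<longleftrightarrow> convex {(x, s::real). f x \<le> ereal s}"

definition ereal_lsc :: "('a::topological_space \<Rightarrow> ereal) \<Rightarrow> bool" where
  "ereal_lsc f \<longleftrightarrow> (\<forall>x c. c < f x \<longrightarrow> (\<forall>\<^sub>F y in at x. c < f y))"

definition sublevel :: "('a \<Rightarrow> ereal) \<Rightarrow> real \<Rightarrow> 'a set" where
  "sublevel f s = {x. f x \<le> ereal s}"

definition polar :: "'a::real_inner set \<Rightarrow> 'a set" where
  "polar K = {y. \<forall>x\<in>K. inner x y \<le> 1}"

text \<open>Division with the conventions of the A-transform:
  a/0 = +inf if a>0, a/0 = 0 if a<=0, a/inf = 0.\<close>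
definition adiv :: "real \<Rightarrow> ereal \<Rightarrow> ereal" where
  "adiv a b = (if b = 0 then (if a > 0 then \<infinity> else 0)
               else if b = \<infinity> then 0 else ereal (a / real_of_ereal b))"

definition phi_polar :: "('a::real_inner \<Rightarrow> ereal) \<Rightarrow> 'a \<Rightarrow> ereal" where
  "phi_polar f x = (SUP y. adiv (inner x y - 1) (f y))"

end

theory Submission
  imports Defs
begin

theorem proposition2p9:
  fixes \<phi> :: "real ^ 'n \<Rightarrow> ereal" and t :: real
  assumes nonneg: "\<And>x. \<phi> x \<ge> 0"
    and conv: "ereal_convex \<phi>"
    and lsc: "ereal_lsc \<phi>"
    and zero: "\<phi> 0 = 0"
    and tpos: "t > 0"
  shows "polar (sublevel \<phi> (1 / t)) \<subseteq> sublevel (phi_polar \<phi>) t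
       \<and> sublevel (phi_polar \<phi>) t \<subseteq> (\<lambda>x. 2 *\<^sub>R x) ` polar (sublevel \<phi> (1 / t))"
proof
  let ?S = "{(x, s::real). \<phi> x \<le> ereal s}"
  have cS: "convex ?S" using conv unfolding ereal_convex_def .
  show "polar (sublevel \<phi> (1 / t)) \<subseteq> sublevel (phi_polar \<phi>) t"
  proof
    fix x assume xK: "x \<in> polar (sublevel \<phi> (1 / t))"
    have K: "\<And>y. \<phi> y \<le> ereal (1/t) \<Longrightarrow> inner y x \<le> 1"
      using xK unfolding polar_def sublevel_def by auto
    have "adiv (inner x y - 1) (\<phi> y) \<le> ereal t" for y
    proof (cases "\<phi> y = 0")
      case True
      then have "inner y x \<le> 1" using K[of y] tpos by simp
      then show ?thesis using True tpos by (simp add: adiv_def inner_commute)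
    next
      case False
      show ?thesis
      proof (cases "\<phi> y = \<infinity>")
        case True then show ?thesis using False tpos by (simp add: adiv_def)
      next
        case False2: False
        obtain r where r: "\<phi> y = ereal r" using False2 nonneg[of y]
          by (cases "\<phi> y") auto
        have rpos: "r > 0" using r False nonneg[of y] by auto
        have main: "inner x y - 1 \<le> t * r"
        proof (cases "r \<le> 1/t")
          case True
          then have "inner y x \<le> 1" using K[of y] r by simp
          moreover have "0 \<le> t * r" using rpos tpos by simp
          ultimately show ?thesis by (simp add: inner_commute)
        next
          case False
          define l where "l = 1/(t*r)"
          have l0: "0 < l" "l < 1" using False rpos tpos unfolding l_def
            by (auto simp: field_simps)
          have "(0::real^'n, 0::real) \<in> ?S" using zero by simp
          moreover have "(y, r) \<in> ?S" using r by simp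
          ultimately have "(1 - l) *\<^sub>R (0::real^'n, 0::real) + l *\<^sub>R (y, r) \<in> ?S"
            using cS l0 by (intro convexD) auto
          then have "\<phi> (l *\<^sub>R y) \<le> ereal (l * r)" by simp
          also have "l * r = 1/t" using rpos tpos unfolding l_def by (simp add: field_simps)
          finally have "inner (l *\<^sub>R y) x \<le> 1" using K by blast
          then have "l * inner x y \<le> 1" by (simp add: inner_commute)
          then have "inner x y \<le> 1 / l" using l0 by (simp add: field_simps)
          then show ?thesis using rpos tpos unfolding l_def by (simp add: field_simps)
        qed
        have "(inner x y - 1) / r \<le> t" using main rpos by (simp add: field_simps)
        then show ?thesis using r rpos by (simp add: adiv_def)
      qed
    qed
    then show "x \<in> sublevel (phi_polar \<phi>) t"
      unfolding sublevel_def phi_polar_def by (simp add: SUP_le_iff)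
  qed
next
  show "sublevel (phi_polar \<phi>) t \<subseteq> (\<lambda>x. 2 *\<^sub>R x) ` polar (sublevel \<phi> (1 / t))"
  proof
    fix x assume "x \<in> sublevel (phi_polar \<phi>) t"
    then have A: "\<And>y. adiv (inner x y - 1) (\<phi> y) \<le> ereal t"
      unfolding sublevel_def phi_polar_def by (simp add: SUP_le_iff)
    have "(1/2) *\<^sub>R x \<in> polar (sublevel \<phi> (1 / t))"
      unfolding polar_def sublevel_def
    proof (clarify)
      fix y assume yK: "\<phi> y \<le> ereal (1/t)"
      have "inner x y \<le> 2"
      proof (cases "\<phi> y = 0")
        case True
        then show ?thesis using A[of y] by (auto simp: adiv_def split: if_splits)
      next
        case False
        obtain r where r: "\<phi> y = ereal r" using yK nonneg[of y]
          by (cases "\<phi> y") auto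
        have rpos: "r > 0" using r False nonneg[of y] by auto
        have "r \<le> 1/t" using yK r by simp
        then have tr: "t * r \<le> 1" using tpos by (simp add: field_simps)
        have "(inner x y - 1) / r \<le> t" using A[of y] r rpos by (simp add: adiv_def)
        then have "inner x y - 1 \<le> t * r" using rpos by (simp add: field_simps)
        then show ?thesis using tr by simp
      qed
      then show "inner y ((1/2) *\<^sub>R x) \<le> 1" by (simp add: inner_commute)
    qed
    moreover have "x = 2 *\<^sub>R ((1/2) *\<^sub>R x)" by simp
    ultimately show "x \<in> (\<lambda>x. 2 *\<^sub>R x) ` polar (sublevel \<phi> (1 / t))" by blast
  qed
qed

end
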